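(* Let $m\ge 3$, let $C$ be a set of $m$ candidates, and let $T$ be the set of all $m!$ strict rankings of $C$. Let $w=(w_1,\dots,w_m)$ satisfy $1=w_1\ge w_2\ge\cdots\ge w_m=0$, and for $t\in T$, $\alpha\in C$ let $\sigma_t(\alpha)=w_i$, where $i$ is the position of $\alpha$ in $t$. Suppose $n$ voters each independently choose a ranking uniformly at random from $T$, let $N_t$ be the number of voters choosing $t$, and let $|\alpha|=\sum_{t\in T}N_t\sigma_t(\alpha)$. Then $$\mathbb{P}\bigl(\text{the scores } |\alpha|,\ \alpha\in C,\ \text{are pairwise distinct}\bigr)\to 1\qquad\text{as } n\to\infty.$$ *)

theory Defs
  imports "HOL-Probability.Probability" "HOL-Combinatorics.Multiset_Permutations"
begin

text \<open>A strict ranking of C is a list enumerating C without repetition, best first.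
  The set T of all m! rankings is permutations_of_set C.\<close>

definition rankings :: "'a set \<Rightarrow> 'a list set" where
  "rankings C = permutations_of_set C"

definition position :: "'a list \<Rightarrow> 'a \<Rightarrow> nat" where
  "position t a = (THE i. i < length t \<and> t ! i = a) + 1"

definition sigma :: "(nat \<Rightarrow> real) \<Rightarrow> 'a list \<Rightarrow> 'a \<Rightarrow> real" where
  "sigma w t a = w (position t a)"

definition vote_count :: "nat \<Rightarrow> (nat \<Rightarrow> 'a list) \<Rightarrow> 'a list \<Rightarrow> nat" where
  "vote_count n p t = card {i \<in> {..<n}. p i = t}"

definition score :: "'a set \<Rightarrow> (nat \<Rightarrow> real) \<Rightarrow> nat \<Rightarrow> (nat \<Rightarrow> 'a list) \<Rightarrow> 'a \<Rightarrow> real" where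
  "score C w n p a = (\<Sum>t\<in>rankings C. real (vote_count n p t) * sigma w t a)"

definition profile_pmf :: "'a set \<Rightarrow> nat \<Rightarrow> (nat \<Rightarrow> 'a list) pmf" where
  "profile_pmf C n = Pi_pmf {..<n} undefined (\<lambda>_. pmf_of_set (rankings C))"

end

theory Submission
  imports Defs "HOL-Real_Asymp.Real_Asymp"
begin

lemma position_nth:
  assumes "distinct t" "i < length t"
  shows "position t (t ! i) = Suc i"
proof -
  have "(THE j. j < length t \<and> t ! j = t ! i) = i"
    by (rule the_equality) (use assms in \<open>auto simp: nth_eq_iff_index_eq\<close>)
  thus ?thesis by (simp add: position_def)
qed

definition tau :: "'a \<Rightarrow> 'a \<Rightarrow> 'a list \<Rightarrow> 'a list" where
  "tau a b t = map (\<lambda>x. if x = a then b else if x = b then a else x) t"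

lemma position_tau:
  assumes "a \<noteq> b"
  shows "position (tau a b t) a = position t b" "position (tau a b t) b = position t a"
proof -
  have "\<And>i. (i < length (tau a b t) \<and> tau a b t ! i = a) = (i < length t \<and> t ! i = b)"
    using assms by (auto simp: tau_def split: if_splits)
  thus "position (tau a b t) a = position t b" unfolding position_def by simp
  have "\<And>i. (i < length (tau a b t) \<and> tau a b t ! i = b) = (i < length t \<and> t ! i = a)"
    using assms by (auto simp: tau_def split: if_splits)
  thus "position (tau a b t) b = position t a" unfolding position_def by simp
qed

lemma tau_tau [simp]: "tau a b (tau a b t) = t"
  by (induction t) (auto simp: tau_def)

lemma tau_in:
  assumes "a \<in> C" "b \<in> C" "t \<in> rankings C"
  shows "tau a b t \<in> rankings C"
proof -
  let ?f = "\<lambda>x. if x = a then b else if x = b then a else x"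
  have "inj ?f" by (auto simp: inj_def split: if_splits)
  moreover have "?f ` C = C" using assms(1,2) by (auto split: if_splits)
  ultimately show ?thesis using assms(3)
    by (auto simp: rankings_def permutations_of_set_def tau_def distinct_map intro: inj_on_subset)
qed

lemma sum_real_card_filter:
  "finite S \<Longrightarrow> real (card {x\<in>S. P x}) = (\<Sum>x\<in>S. if P x then 1 else 0)"
  by (simp add: sum.inter_filter[symmetric])

lemma score_sum:
  assumes "finite C" "p \<in> PiE_dflt {..<n} undefined (\<lambda>_. rankings C)"
  shows "score C w n p a = (\<Sum>i<n. sigma w (p i) a)"
proof -
  have fin: "finite (rankings C)" using assms(1) by (simp add: rankings_def)
  have "score C w n p a = (\<Sum>t\<in>rankings C. (\<Sum>i\<in>{i\<in>{..<n}. p i = t}. sigma w (p i) a))"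
    unfolding score_def vote_count_def by (intro sum.cong refl) auto
  also have "\<dots> = (\<Sum>i<n. sigma w (p i) a)"
    by (rule sum.group) (use assms fin in \<open>auto simp: PiE_dflt_def\<close>)
  finally show ?thesis .
qed



lemma count_subsets:
  fixes x :: "'b \<Rightarrow> real"
  assumes "finite K" "finite J" "J \<inter> K = {}" "\<forall>i\<in>J. x i = 1"
  shows "real (card {B. B \<subseteq> J \<union> K \<and> sum x B = c}) \<le> 2 ^ card K * real (card J choose (card J div 2))"
  using assms(1,3)
proof (induction K arbitrary: c rule: finite_induct)
  case empty
  have sub: "{B. B \<subseteq> J \<union> {} \<and> sum x B = c} \<subseteq> {B. B \<subseteq> J \<and> card B = nat \<lfloor>c\<rfloor>}"
  proof
    fix B assume "B \<in> {B. B \<subseteq> J \<union> {} \<and> sum x B = c}"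
    hence B: "B \<subseteq> J" "sum x B = c" by auto
    have "sum x B = real (card B)" using B(1) assms(4) by (simp add: subset_iff)
    thus "B \<in> {B. B \<subseteq> J \<and> card B = nat \<lfloor>c\<rfloor>}" using B by auto
  qed
  have "card {B. B \<subseteq> J \<union> {} \<and> sum x B = c} \<le> card {B. B \<subseteq> J \<and> card B = nat \<lfloor>c\<rfloor>}"
    by (rule card_mono[OF _ sub]) (use assms(2) in simp)
  also have "\<dots> = card J choose nat \<lfloor>c\<rfloor>" using assms(2) by (rule n_subsets)
  also have "\<dots> \<le> card J choose (card J div 2)" by (rule binomial_maximum)
  finally show ?case by simp
next
  case (insert a K)
  have aJ: "a \<notin> J" "a \<notin> K" using insert by auto
  have dis: "J \<inter> K = {}" using insert by auto
  let ?S = "\<lambda>c. {B. B \<subseteq> J \<union> K \<and> sum x B = c}"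
  have finS: "finite (?S c)" for c using insert(1) assms(2) by simp
  have "{B. B \<subseteq> J \<union> insert a K \<and> sum x B = c} \<subseteq> ?S c \<union> insert a ` ?S (c - x a)"
  proof
    fix B assume "B \<in> {B. B \<subseteq> J \<union> insert a K \<and> sum x B = c}"
    hence B: "B \<subseteq> J \<union> insert a K" "sum x B = c" by auto
    show "B \<in> ?S c \<union> insert a ` ?S (c - x a)"
    proof (cases "a \<in> B")
      case False thus ?thesis using B by auto
    next
      case True
      have fB: "finite B" using B(1) insert(1) assms(2) by (meson finite_Un finite_insert finite_subset)
      have "sum x B = x a + sum x (B - {a})" using True fB by (simp add: sum.remove)
      hence "B - {a} \<in> ?S (c - x a)" using B by auto
      moreover have "B = insert a (B - {a})" using True by auto
      ultimately show ?thesis by blast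
    qed
  qed
  hence "card {B. B \<subseteq> J \<union> insert a K \<and> sum x B = c} \<le> card (?S c \<union> insert a ` ?S (c - x a))"
    by (intro card_mono) (use finS in auto)
  also have "\<dots> \<le> card (?S c) + card (insert a ` ?S (c - x a))" by (rule card_Un_le)
  also have "\<dots> \<le> card (?S c) + card (?S (c - x a))" using card_image_le[OF finS] by simp
  finally have "real (card {B. B \<subseteq> J \<union> insert a K \<and> sum x B = c}) \<le> real (card (?S c)) + real (card (?S (c - x a)))"
    by linarith
  also have "\<dots> \<le> 2 * (2 ^ card K * real (card J choose (card J div 2)))"
    using insert.IH[OF dis, of c] insert.IH[OF dis, of "c - x a"] by linarith
  also have "\<dots> = 2 ^ card (insert a K) * real (card J choose (card J div 2))"
    using insert(1,2) by simp
  finally show ?case .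
qed

definition gfun :: "nat \<Rightarrow> real" where
  "gfun k = real (k choose (k div 2)) / 2 ^ k"

lemma aux_field: "(r + 1) * ((r + 1) * X) = (2 * r + 2) * ((2 * r + 1) * Y) \<Longrightarrow> r \<ge> 0 \<Longrightarrow> X = Y * (2*(2*r+1)) / (r+1)"
  for r X Y :: real
proof -
  assume h: "(r + 1) * ((r + 1) * X) = (2 * r + 2) * ((2 * r + 1) * Y)" and r: "r \<ge> 0"
  have "(r+1) * ((r+1)*X - (2*(2*r+1))*Y) = 0" using h by (simp add: algebra_simps)
  hence "(r+1)*X = (2*(2*r+1))*Y" using r by simp
  thus ?thesis using r by (simp add: field_simps)
qed

lemma aux_field2: "r \<ge> 0 \<Longrightarrow> q > 0 \<Longrightarrow> c * (2*(2*r+1)) / (r+1) / (4 * q) = c / q * ((2*r+1)/(2*r+2))"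
  for r q c :: real
proof -
  assume r: "r \<ge> 0" and q: "q > 0"
  have d1: "(r+1)*(4*q) \<noteq> 0" and d2: "q*(2*r+2) \<noteq> 0" using r q by auto
  have "c * (2*(2*r+1)) / (r+1) / (4 * q) = c * (2*(2*r+1)) / ((r+1)*(4*q))"
    by (simp add: divide_divide_eq_left)
  also have "\<dots> = (c * (2*r+1)) / (q*(2*r+2))"
    using d1 d2 by (subst frac_eq_eq) (auto simp: algebra_simps)
  also have "\<dots> = c / q * ((2*r+1)/(2*r+2))" by simp
  finally show ?thesis .
qed

lemma aux_field3: "r \<ge> 0 \<Longrightarrow> 1/(2*r+1)*((2*r+1)/(2*r+2))^2 \<le> 1/(2*r+3)"
  for r :: real
proof -
  assume r: "r \<ge> 0"
  have "1/(2*r+1)*((2*r+1)/(2*r+2))^2 = (2*r+1)/((2*r+2)*(2*r+2))"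
  proof -
    have "1/(2*r+1)*((2*r+1)/(2*r+2))^2 = (1 * ((2*r+1)*(2*r+1))) / ((2*r+1) * ((2*r+2)*(2*r+2)))"
      by (simp add: power2_eq_square)
    also have "\<dots> = (2*r+1)/((2*r+2)*(2*r+2))"
    proof -
      have n1: "(2*r+1) * ((2*r+2)*(2*r+2)) \<noteq> 0" and n2: "(2*r+2)*(2*r+2) \<noteq> 0" using r by simp_all
      show ?thesis by (subst frac_eq_eq[OF n1 n2]) (simp add: algebra_simps)
    qed
    finally show ?thesis .
  qed
  also have "\<dots> \<le> 1/(2*r+3)"
    using r by (simp add: divide_simps) (simp add: algebra_simps)
  finally show ?thesis .
qed

lemma central_even: "(real ((2*r) choose r) / 4 ^ r)^2 \<le> 1 / (2*r+1)"
proof (induction r)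
  case 0 then show ?case by simp
next
  case (Suc r)
  have rec: "real ((2*Suc r) choose Suc r) = real ((2*r) choose r) * (2*(2*real r+1)) / (real r+1)"
  proof -
    have e1: "Suc r * ((2*Suc r) choose Suc r) = Suc (Suc (2*r)) * (Suc (2*r) choose r)"
      using Suc_times_binomial[of r "Suc (2*r)"] by simp
    have e2: "Suc r * (Suc (r + r) choose Suc r) = Suc r * (Suc (r + r) choose r)"
      by (rule Suc_times_binomial_add)
    have e3: "Suc r * (Suc (2*r) choose Suc r) = Suc (2*r) * ((2*r) choose r)"
      by (rule Suc_times_binomial)
    have e2': "Suc (2*r) choose Suc r = Suc (2*r) choose r"
    proof -
      have "Suc (r + r) choose Suc r = Suc (r + r) choose r"
        using e2 by (metis Suc_neq_Zero mult_left_cancel)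
      thus ?thesis by (simp only: mult_2)
    qed
    have "Suc r * (Suc r * ((2*Suc r) choose Suc r)) = Suc r * (Suc (Suc (2*r)) * (Suc (2*r) choose Suc r))"
      by (simp only: e1 e2')
    also have "\<dots> = Suc (Suc (2*r)) * (Suc r * (Suc (2*r) choose Suc r))"
      by (rule mult.left_commute)
    also have "\<dots> = Suc (Suc (2*r)) * (Suc (2*r) * ((2*r) choose r))"
      by (simp only: e3)
    finally have "real (Suc r * (Suc r * ((2*Suc r) choose Suc r))) = real (Suc (Suc (2*r)) * (Suc (2*r) * ((2*r) choose r)))"
      by (simp only:)
    hence "real (Suc r) * (real (Suc r) * real ((2*Suc r) choose Suc r)) = real (Suc (Suc (2*r))) * (real (Suc (2*r)) * real ((2*r) choose r))"
      by (simp only: of_nat_mult)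
    hence "(real r + 1) * ((real r + 1) * real ((2*Suc r) choose Suc r)) = (2 * real r + 2) * ((2 * real r + 1) * real ((2*r) choose r))"
    proof -
      have q1: "real (Suc r) = real r + 1" "real (Suc (Suc (2*r))) = 2 * real r + 2" "real (Suc (2*r)) = 2 * real r + 1"
        by simp_all
      show ?thesis using \<open>real (Suc r) * (real (Suc r) * real ((2*Suc r) choose Suc r)) = _\<close> unfolding q1 .
    qed
    thus ?thesis by (rule aux_field) simp
  qed
  let ?a = "real ((2*r) choose r) / 4 ^ r"
  have "real ((2*Suc r) choose Suc r) / 4 ^ Suc r = (real ((2*r) choose r) * (2*(2*real r+1)) / (real r+1)) / 4 ^ Suc r"
    by (simp only: rec)
  also have "\<dots> = ?a * ((2*real r+1) / (2*real r+2))"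
    using aux_field2[of "real r" "4^r" "real ((2*r) choose r)"] by simp
  finally have "real ((2*Suc r) choose Suc r) / 4 ^ Suc r = ?a * ((2*real r+1) / (2*real r+2))" .
  hence "(real ((2*Suc r) choose Suc r) / 4 ^ Suc r)^2 = ?a^2 * ((2*real r+1) / (2*real r+2))^2"
    by (simp only: power_mult_distrib)
  also have "\<dots> \<le> 1 / (2*real r+1) * ((2*real r+1) / (2*real r+2))^2"
    using Suc.IH by (intro mult_right_mono) auto
  also have "\<dots> \<le> 1 / (2 * real r + 3)"
    by (rule aux_field3) simp
  also have "\<dots> = 1 / (2 * real (Suc r) + 1)" by simp
  finally show ?case .
qed

lemma gfun_sq: "(gfun k)^2 \<le> 1 / (real k + 1)"
proof (cases "even k")
  case True
  then obtain r where k: "k = 2*r" by blast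
  have "gfun k = real ((2*r) choose r) / 4 ^ r"
    by (simp add: gfun_def k power_mult)
  thus ?thesis using central_even[of r] k by simp
next
  case False
  then obtain r where k: "k = 2*r+1" using oddE by blast
  have "(2*Suc r) choose Suc r = (Suc (2*r) choose r) + (Suc (2*r) choose Suc r)" by simp
  also have "Suc (2*r) choose Suc r = Suc (2*r) choose r"
    using central_binomial_odd[of "Suc (2*r)"] by simp
  finally have c: "(2*Suc r) choose Suc r = 2 * (Suc (2*r) choose r)" by simp
  have kd: "k div 2 = r" using k by simp
  have p4: "(4::real)^Suc r = 2 * 2^(Suc (2*r))" by (simp add: power_mult)
  have "gfun k = real (Suc (2*r) choose r) / 2^(Suc (2*r))"
    unfolding gfun_def kd by (simp add: k)
  also have "\<dots> = real (2 * (Suc (2*r) choose r)) / (2 * 2^(Suc (2*r)))" by simp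
  also have "\<dots> = real ((2*Suc r) choose Suc r) / 4 ^ Suc r"
    by (simp only: c p4)
  finally have "gfun k = real ((2*Suc r) choose Suc r) / 4 ^ Suc r" .
  hence "(gfun k)^2 \<le> 1 / (2 * real (Suc r) + 1)" using central_even[of "Suc r"] by simp
  also have "\<dots> \<le> 1 / (real k + 1)" using k by (simp add: divide_simps)
  finally show ?thesis .
qed

lemma gfun_nonneg: "gfun k \<ge> 0" by (simp add: gfun_def)

lemma gfun_le1: "gfun k \<le> 1"
proof -
  have "real (k choose (k div 2)) \<le> real (2^k)" using binomial_le_pow2[of k "k div 2"] by linarith
  thus ?thesis by (simp add: gfun_def divide_simps)
qed

lemma gfun_small:
  assumes "real k + 1 \<ge> x" "x > 0"
  shows "gfun k \<le> sqrt (1 / x)"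
proof -
  have "(gfun k)^2 \<le> 1 / x"
  proof -
    have "1 / (real k + 1) \<le> 1 / x" using assms by (intro divide_left_mono) auto
    thus ?thesis using gfun_sq[of k] by linarith
  qed
  thus ?thesis using gfun_nonneg[of k] real_le_rsqrt by blast
qed



definition Xd :: "(nat \<Rightarrow> real) \<Rightarrow> 'a \<Rightarrow> 'a \<Rightarrow> 'a list \<Rightarrow> real" where
  "Xd w a b t = sigma w t a - sigma w t b"

definition flip :: "'a \<Rightarrow> 'a \<Rightarrow> nat set \<Rightarrow> (nat \<Rightarrow> 'a list) \<Rightarrow> nat \<Rightarrow> 'a list" where
  "flip a b B p = (\<lambda>i. if i \<in> B then tau a b (p i) else p i)"

definition Aset :: "'a set \<Rightarrow> nat \<Rightarrow> 'a \<Rightarrow> 'a \<Rightarrow> 'a list set" where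
  "Aset C m a b = {t \<in> rankings C. position t a = 1 \<and> position t b = m}"

abbreviation Om :: "'a set \<Rightarrow> nat \<Rightarrow> (nat \<Rightarrow> 'a list) set" where
  "Om C n \<equiv> PiE_dflt {..<n} undefined (\<lambda>_. rankings C)"

context
  fixes C :: "'a set" and m :: nat and w :: "nat \<Rightarrow> real" and a b :: 'a
  assumes finC: "finite C" and cardC: "card C = m" and m3: "m \<ge> 3"
    and w1: "w 1 = 1" and wm: "w m = 0"
    and abC: "a \<in> C" "b \<in> C" and ab: "a \<noteq> b"
begin

lemma Xd_tau: "Xd w a b (tau a b t) = - Xd w a b t"
  by (simp add: Xd_def sigma_def position_tau[OF ab])

lemma Xd_A: "t \<in> Aset C m a b \<Longrightarrow> Xd w a b t = 1"
  using w1 wm by (simp add: Xd_def sigma_def Aset_def)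

lemma A_nonempty: "Aset C m a b \<noteq> {}"
proof -
  obtain xs where xs: "set xs = C - {a, b}" "distinct xs"
    using finite_distinct_list[of "C - {a,b}"] finC by auto
  define t where "t = a # xs @ [b]"
  have dt: "distinct t" using xs ab by (auto simp: t_def)
  have st: "set t = C" using xs abC by (auto simp: t_def)
  have lt: "length t = m" using distinct_card[OF dt] st cardC by simp
  have tT: "t \<in> rankings C" using dt st by (simp add: rankings_def permutations_of_set_def)
  have "position t (t ! 0) = 1" using position_nth[OF dt, of 0] lt m3 by simp
  hence pa: "position t a = 1" by (simp add: t_def)
  have "t ! (length t - 1) = b" by (simp add: t_def nth_append)
  hence "t ! (m - 1) = b" using lt by simp
  moreover have "position t (t ! (m - 1)) = m" using position_nth[OF dt, of "m - 1"] lt m3 by simp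
  ultimately have pb: "position t b = m" by simp
  show ?thesis using tT pa pb by (auto simp: Aset_def)
qed

lemma flip_in: "B \<subseteq> {..<n} \<Longrightarrow> p \<in> Om C n \<Longrightarrow> flip a b B p \<in> Om C n"
  using tau_in[OF abC] by (auto simp: flip_def PiE_dflt_def)

lemma flip_flip [simp]: "flip a b B (flip a b B p) = p"
  by (auto simp: flip_def)

lemma score_diff: "p \<in> Om C n \<Longrightarrow> score C w n p a - score C w n p b = (\<Sum>i<n. Xd w a b (p i))"
  by (simp add: score_sum[OF finC] Xd_def sum_subtractf)

lemma score_flip:
  assumes "B \<subseteq> {..<n}" "p \<in> Om C n"
  shows "score C w n (flip a b B p) a - score C w n (flip a b B p) b =
         (\<Sum>i<n. Xd w a b (p i)) - 2 * (\<Sum>i\<in>B. Xd w a b (p i))"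
proof -
  have fin: "finite B" using assms(1) finite_subset by blast
  have "score C w n (flip a b B p) a - score C w n (flip a b B p) b = (\<Sum>i<n. Xd w a b (flip a b B p i))"
    by (rule score_diff[OF flip_in[OF assms]])
  also have "\<dots> = (\<Sum>i<n. Xd w a b (p i) - (if i \<in> B then 2 * Xd w a b (p i) else 0))"
    by (intro sum.cong refl) (auto simp: flip_def Xd_tau)
  also have "\<dots> = (\<Sum>i<n. Xd w a b (p i)) - (\<Sum>i<n. if i \<in> B then 2 * Xd w a b (p i) else 0)"
    by (simp add: sum_subtractf)
  also have "(\<Sum>i<n. if i \<in> B then 2 * Xd w a b (p i) else 0) = (\<Sum>i\<in>{..<n} \<inter> B. 2 * Xd w a b (p i))"
    by (simp add: sum.inter_restrict)
  also have "{..<n} \<inter> B = B" using assms(1) by blast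
  finally show ?thesis by (simp add: sum_distrib_left)
qed

lemma finT: "finite (rankings C)" using finC by (simp add: rankings_def)

lemma finOm: "finite (Om C n)" using finT by (intro finite_PiE_dflt) auto

lemma per_p_bound:
  assumes p: "p \<in> Om C n"
  shows "real (card {B \<in> Pow {..<n}. flip a b B p \<in> {p \<in> Om C n. score C w n p a = score C w n p b}})
         \<le> 2 ^ n * gfun (card {i\<in>{..<n}. p i \<in> Aset C m a b})"
proof -
  define J where "J = {i\<in>{..<n}. p i \<in> Aset C m a b}"
  define K where "K = {..<n} - J"
  define x where "x = (\<lambda>i. Xd w a b (p i))"
  define c where "c = (\<Sum>i<n. x i) / 2"
  have JK: "J \<union> K = {..<n}" "J \<inter> K = {}" by (auto simp: J_def K_def)
  have finJ: "finite J" and finK: "finite K" by (auto simp: J_def K_def)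
  have xJ: "\<forall>i\<in>J. x i = 1" by (auto simp: J_def x_def Xd_A)
  have sub: "{B \<in> Pow {..<n}. flip a b B p \<in> {p \<in> Om C n. score C w n p a = score C w n p b}}
             \<subseteq> {B. B \<subseteq> J \<union> K \<and> sum x B = c}"
  proof
    fix B assume "B \<in> {B \<in> Pow {..<n}. flip a b B p \<in> {p \<in> Om C n. score C w n p a = score C w n p b}}"
    hence B: "B \<subseteq> {..<n}" "score C w n (flip a b B p) a = score C w n (flip a b B p) b" by auto
    have "(\<Sum>i<n. x i) - 2 * sum x B = 0"
      using score_flip[OF B(1) p] B(2) by (simp add: x_def)
    hence "sum x B = c" by (simp add: c_def)
    thus "B \<in> {B. B \<subseteq> J \<union> K \<and> sum x B = c}" using B(1) JK by auto
  qed
  have "real (card {B \<in> Pow {..<n}. flip a b B p \<in> {p \<in> Om C n. score C w n p a = score C w n p b}})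
        \<le> real (card {B. B \<subseteq> J \<union> K \<and> sum x B = c})"
    using sub finJ finK by (intro of_nat_mono card_mono) auto
  also have "\<dots> \<le> 2 ^ card K * real (card J choose (card J div 2))"
    by (rule count_subsets[OF finK finJ JK(2) xJ])
  also have "card K = n - card J" unfolding K_def
    by (subst card_Diff_subset) (auto simp: J_def)
  also have "card J \<le> n" using card_mono[of "{..<n}" J] by (auto simp: J_def)
  hence "(2::real) ^ (n - card J) = 2 ^ n / 2 ^ card J" by (simp add: power_diff)
  also have "2 ^ n / 2 ^ card J * real (card J choose (card J div 2)) = 2 ^ n * gfun (card J)"
    by (simp add: gfun_def)
  finally show ?thesis by (simp add: J_def)
qed

lemma card_Z_bound:
  "real (card {p \<in> Om C n. score C w n p a = score C w n p b})
     \<le> (\<Sum>p\<in>Om C n. gfun (card {i\<in>{..<n}. p i \<in> Aset C m a b}))"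
proof -
  define Z where "Z = {p \<in> Om C n. score C w n p a = score C w n p b}"
  have finZ: "finite Z" using finOm by (simp add: Z_def)
  have stepa: "card {p \<in> Om C n. flip a b B p \<in> Z} = card Z" if B: "B \<subseteq> {..<n}" for B
  proof -
    have "{p \<in> Om C n. flip a b B p \<in> Z} = flip a b B ` Z"
    proof (intro equalityI subsetI)
      fix p assume "p \<in> {p \<in> Om C n. flip a b B p \<in> Z}"
      hence "flip a b B p \<in> Z" by simp
      thus "p \<in> flip a b B ` Z" by (metis flip_flip imageI)
    next
      fix q assume "q \<in> flip a b B ` Z"
      then obtain p where "p \<in> Z" "q = flip a b B p" by blast
      thus "q \<in> {p \<in> Om C n. flip a b B p \<in> Z}"
        using flip_in[OF B] by (auto simp: Z_def)
    qed
    moreover have "inj_on (flip a b B) Z" by (metis flip_flip inj_onI)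
    ultimately show ?thesis by (simp add: card_image)
  qed
  have "real (card Z) * 2 ^ n = (\<Sum>B\<in>Pow {..<n}. real (card Z))"
    by (simp add: card_Pow)
  also have "\<dots> = (\<Sum>B\<in>Pow {..<n}. real (card {p \<in> Om C n. flip a b B p \<in> Z}))"
    by (intro sum.cong refl) (simp add: stepa)
  also have "\<dots> = (\<Sum>B\<in>Pow {..<n}. \<Sum>p\<in>Om C n. if flip a b B p \<in> Z then 1 else 0)"
    using finOm by (simp add: sum_real_card_filter)
  also have "\<dots> = (\<Sum>p\<in>Om C n. \<Sum>B\<in>Pow {..<n}. if flip a b B p \<in> Z then 1 else 0)"
    by (rule sum.swap)
  also have "\<dots> = (\<Sum>p\<in>Om C n. real (card {B \<in> Pow {..<n}. flip a b B p \<in> Z}))"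
    by (intro sum.cong refl, rule sum_real_card_filter[symmetric]) simp
  also have "\<dots> \<le> (\<Sum>p\<in>Om C n. 2 ^ n * gfun (card {i\<in>{..<n}. p i \<in> Aset C m a b}))"
    by (intro sum_mono) (unfold Z_def, rule per_p_bound)
  also have "\<dots> = 2 ^ n * (\<Sum>p\<in>Om C n. gfun (card {i\<in>{..<n}. p i \<in> Aset C m a b}))"
    by (simp add: sum_distrib_left)
  finally show ?thesis by (simp add: Z_def mult.commute)
qed

end


lemma limit_aux: fixes q :: real assumes "q > 0"
  shows "(\<lambda>n. exp (- (q^2/2) * real n) + sqrt (1 / (real n * q / 2))) \<longlonglongrightarrow> 0"
  using assms by real_asymp

context
  fixes C :: "'a set" and m :: nat and w :: "nat \<Rightarrow> real" and a b :: 'a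
  assumes finC: "finite C" and cardC: "card C = m" and m3: "m \<ge> 3"
    and w1: "w 1 = 1" and wm: "w m = 0"
    and abC: "a \<in> C" "b \<in> C" and ab: "a \<noteq> b"
begin

lemma finT': "finite (rankings C)" using finC by (simp add: rankings_def)

lemma T_ne: "rankings C \<noteq> {}"
  using A_nonempty[OF finC cardC m3 w1 wm abC ab] by (auto simp: Aset_def)

lemma profile_eq: "profile_pmf C n = pmf_of_set (Om C n)"
  unfolding profile_pmf_def using finT' T_ne by (intro Pi_pmf_of_set) auto

lemma Om_ne: "Om C n \<noteq> {}" using T_ne by simp

definition qq where "qq = real (card (Aset C m a b)) / real (card (rankings C))"

lemma qq_pos: "qq > 0" and qq_le: "qq \<le> 1"
proof -
  have "Aset C m a b \<subseteq> rankings C" by (auto simp: Aset_def)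
  hence "card (Aset C m a b) \<le> card (rankings C)" "card (Aset C m a b) > 0"
    using card_mono[OF finT'] A_nonempty[OF finC cardC m3 w1 wm abC ab] finT'
    by (auto simp: card_gt_0_iff intro: finite_subset)
  thus "qq > 0" "qq \<le> 1" using T_ne finT' by (auto simp: qq_def divide_simps card_gt_0_iff)
qed

lemma map_bern: "map_pmf (\<lambda>t. t \<in> Aset C m a b) (pmf_of_set (rankings C)) = bernoulli_pmf qq"
proof (rule pmf_eqI)
  fix x :: bool
  have "Aset C m a b \<subseteq> rankings C" by (auto simp: Aset_def)
  hence e1: "rankings C \<inter> Aset C m a b = Aset C m a b" by blast
  have e2: "rankings C \<inter> - Aset C m a b = rankings C - Aset C m a b" by blast
  have c2: "card (rankings C - Aset C m a b) = card (rankings C) - card (Aset C m a b)"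
    using \<open>Aset C m a b \<subseteq> rankings C\<close> finT' by (intro card_Diff_subset) (auto intro: finite_subset)
  have cle: "card (Aset C m a b) \<le> card (rankings C)"
    using \<open>Aset C m a b \<subseteq> rankings C\<close> finT' card_mono by blast
  have cpos: "card (rankings C) > 0" using T_ne finT' by (simp add: card_gt_0_iff)
  show "pmf (map_pmf (\<lambda>t. t \<in> Aset C m a b) (pmf_of_set (rankings C))) x = pmf (bernoulli_pmf qq) x"
  proof (cases x)
    case True
    have "(\<lambda>t. t \<in> Aset C m a b) -` {True} = Aset C m a b" by auto
    thus ?thesis using True qq_pos qq_le T_ne finT'
      by (simp add: pmf_map measure_pmf_of_set e1 qq_def)
  next
    case False
    have "(\<lambda>t. t \<in> Aset C m a b) -` {False} = - Aset C m a b" by auto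
    hence "pmf (map_pmf (\<lambda>t. t \<in> Aset C m a b) (pmf_of_set (rankings C))) x
          = real (card (rankings C) - card (Aset C m a b)) / real (card (rankings C))"
      using False T_ne finT' by (simp add: pmf_map measure_pmf_of_set e2 c2)
    also have "\<dots> = 1 - qq" using cle cpos by (simp add: qq_def of_nat_diff divide_simps)
    finally show ?thesis using False qq_pos qq_le by simp
  qed
qed

lemma binom: "map_pmf (\<lambda>p. card {i\<in>{..<n}. p i \<in> Aset C m a b}) (profile_pmf C n) = binomial_pmf n qq"
proof -
  have h1: "Pi_pmf {..<n} (undefined \<in> Aset C m a b) (\<lambda>_. map_pmf (\<lambda>t. t \<in> Aset C m a b) (pmf_of_set (rankings C)))
        = map_pmf (\<lambda>h. (\<lambda>t. t \<in> Aset C m a b) \<circ> h) (profile_pmf C n)"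
    unfolding profile_pmf_def by (rule Pi_pmf_map) auto
  have "binomial_pmf n qq = map_pmf (\<lambda>f. card {x\<in>{..<n}. f x}) (Pi_pmf {..<n} (undefined \<in> Aset C m a b) (\<lambda>_. bernoulli_pmf qq))"
    using qq_pos qq_le by (intro binomial_pmf_altdef') auto
  also have "\<dots> = map_pmf (\<lambda>f. card {x\<in>{..<n}. f x}) (map_pmf (\<lambda>h. (\<lambda>t. t \<in> Aset C m a b) \<circ> h) (profile_pmf C n))"
    by (simp only: h1[symmetric] map_bern)
  also have "\<dots> = map_pmf (\<lambda>p. card {i\<in>{..<n}. p i \<in> Aset C m a b}) (profile_pmf C n)"
    by (simp add: map_pmf_comp o_def)
  finally show ?thesis by simp
qed

lemma pair_bound:
  assumes n: "n > 0"
  shows "measure_pmf.prob (profile_pmf C n) {p. score C w n p a = score C w n p b}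
         \<le> exp (- (qq^2/2) * real n) + sqrt (1 / (real n * qq / 2))"
proof -
  define kf where "kf = (\<lambda>p. card {i\<in>{..<n}. p i \<in> Aset C m a b})"
  define s where "s = sqrt (1 / (real n * qq / 2))"
  define Om' where "Om' = Om C n"
  have finO: "finite Om'" unfolding Om'_def using finT' by (intro finite_PiE_dflt) auto
  have neO: "Om' \<noteq> {}" unfolding Om'_def by (rule Om_ne)
  have cO: "real (card Om') > 0" using finO neO by (simp add: card_gt_0_iff)
  have nq: "real n * qq / 2 > 0" using n qq_pos by simp
  have "measure_pmf.prob (profile_pmf C n) {p. score C w n p a = score C w n p b}
        = real (card {p \<in> Om'. score C w n p a = score C w n p b}) / real (card Om')"
    unfolding profile_eq Om'_def using finO neO unfolding Om'_def
    by (subst measure_pmf_of_set) (auto intro: arg_cong[where f=card] simp: Int_def)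
  also have "real (card {p \<in> Om'. score C w n p a = score C w n p b}) \<le> (\<Sum>p\<in>Om'. gfun (kf p))"
    unfolding Om'_def kf_def by (rule card_Z_bound[OF finC cardC m3 w1 wm abC ab])
  also have "\<dots> \<le> (\<Sum>p\<in>Om'. (if real (kf p) \<le> real n * qq - real n * qq / 2 then 1 else 0) + s)"
  proof (intro sum_mono)
    fix p assume "p \<in> Om'"
    show "gfun (kf p) \<le> (if real (kf p) \<le> real n * qq - real n * qq / 2 then 1 else 0) + s"
    proof (cases "real (kf p) \<le> real n * qq - real n * qq / 2")
      case True
      have "s \<ge> 0" using nq by (simp add: s_def)
      thus ?thesis using True gfun_le1[of "kf p"] by simp
    next
      case False
      hence "real (kf p) + 1 \<ge> real n * qq / 2" by simp
      hence "gfun (kf p) \<le> s" using gfun_small[OF _ nq] by (simp add: s_def)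
      thus ?thesis using False by simp
    qed
  qed
  also have "\<dots> = real (card {p \<in> Om'. real (kf p) \<le> real n * qq - real n * qq / 2}) + real (card Om') * s"
    using finO by (simp add: sum.distrib sum_real_card_filter)
  finally have "measure_pmf.prob (profile_pmf C n) {p. score C w n p a = score C w n p b}
       \<le> (real (card {p \<in> Om'. real (kf p) \<le> real n * qq - real n * qq / 2}) + real (card Om') * s) / real (card Om')"
    using cO by (simp add: divide_right_mono)
  also have "\<dots> = real (card {p \<in> Om'. real (kf p) \<le> real n * qq - real n * qq / 2}) / real (card Om') + s"
    using cO by (simp add: field_simps)
  also have "real (card {p \<in> Om'. real (kf p) \<le> real n * qq - real n * qq / 2}) / real (card Om')
           = measure_pmf.prob (profile_pmf C n) {p. real (kf p) \<le> real n * qq - real n * qq / 2}"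
    unfolding profile_eq Om'_def using finO neO unfolding Om'_def
    by (subst measure_pmf_of_set) (auto intro: arg_cong[where f=card] simp: Int_def)
  also have "\<dots> = measure_pmf.prob (map_pmf kf (profile_pmf C n)) {x. real x \<le> real n * qq - real n * qq / 2}"
    by simp
  also have "\<dots> = measure_pmf.prob (binomial_pmf n qq) {x. real x \<le> real n * qq - real n * qq / 2}"
    unfolding kf_def binom ..
  also have "\<dots> \<le> exp (-2 * (real n * qq / 2)\<^sup>2 / real n)"
    using binomial_distribution.prob_le[of qq n "real n * qq / 2"] qq_pos qq_le n
    by (simp add: binomial_distribution_def)
  also have "-2 * (real n * qq / 2)\<^sup>2 / real n = - (qq^2/2) * real n"
    using n by (simp add: power2_eq_square field_simps)
  finally show ?thesis by (simp add: s_def)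
qed

lemma pair_tendsto:
  "(\<lambda>n. measure_pmf.prob (profile_pmf C n) {p. score C w n p a = score C w n p b}) \<longlonglongrightarrow> 0"
proof (rule tendsto_sandwich[of "\<lambda>_. 0" _ _ "\<lambda>n. exp (- (qq^2/2) * real n) + sqrt (1 / (real n * qq / 2))"])
  show "\<forall>\<^sub>F n in sequentially. 0 \<le> measure_pmf.prob (profile_pmf C n) {p. score C w n p a = score C w n p b}"
    by simp
  show "\<forall>\<^sub>F n in sequentially. measure_pmf.prob (profile_pmf C n) {p. score C w n p a = score C w n p b}
          \<le> exp (- (qq^2/2) * real n) + sqrt (1 / (real n * qq / 2))"
    using eventually_gt_at_top[of 0] by eventually_elim (rule pair_bound)
  show "(\<lambda>n. exp (- (qq^2/2) * real n) + sqrt (1 / (real n * qq / 2))) \<longlonglongrightarrow> 0"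
    by (rule limit_aux[OF qq_pos])
qed simp

end

theorem proposition3:
  fixes C :: "'a set" and m :: nat and w :: "nat \<Rightarrow> real"
  assumes "finite C" and "card C = m" and "m \<ge> 3"
    and "w 1 = 1" and "w m = 0"
    and "\<And>i j. 1 \<le> i \<Longrightarrow> i \<le> j \<Longrightarrow> j \<le> m \<Longrightarrow> w j \<le> w i"
  shows "(\<lambda>n. measure_pmf.prob (profile_pmf C n) {p. inj_on (score C w n p) C}) \<longlonglongrightarrow> 1"
proof -
  define I where "I = {(a,b). a \<in> C \<and> b \<in> C \<and> a \<noteq> b}"
  have finI: "finite I"
    by (rule finite_subset[of _ "C \<times> C"]) (use assms(1) in \<open>auto simp: I_def\<close>)
  define F where "F = (\<lambda>n ab. {p. score C w n p (fst ab) = score C w n p (snd ab)})"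
  have lim0: "(\<lambda>n. \<Sum>ab\<in>I. measure_pmf.prob (profile_pmf C n) (F n ab)) \<longlonglongrightarrow> 0"
  proof (rule tendsto_null_sum)
    fix ab assume "ab \<in> I"
    then obtain a b where ab: "ab = (a,b)" "a \<in> C" "b \<in> C" "a \<noteq> b" by (auto simp: I_def)
    show "(\<lambda>n. measure_pmf.prob (profile_pmf C n) (F n ab)) \<longlonglongrightarrow> 0"
      unfolding F_def ab(1) fst_conv snd_conv
      by (rule pair_tendsto[OF assms(1-5) ab(2,3,4)])
  qed
  have low: "1 - (\<Sum>ab\<in>I. measure_pmf.prob (profile_pmf C n) (F n ab))
             \<le> measure_pmf.prob (profile_pmf C n) {p. inj_on (score C w n p) C}" for n
  proof -
    let ?E = "{p. inj_on (score C w n p) C}"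
    have "UNIV - ?E \<subseteq> (\<Union>ab\<in>I. F n ab)"
      by (auto simp: inj_on_def I_def F_def)
    hence "measure_pmf.prob (profile_pmf C n) (UNIV - ?E) \<le> measure_pmf.prob (profile_pmf C n) (\<Union>ab\<in>I. F n ab)"
      by (intro measure_pmf.finite_measure_mono) auto
    also have "\<dots> \<le> (\<Sum>ab\<in>I. measure_pmf.prob (profile_pmf C n) (F n ab))"
      using finI by (intro measure_pmf.finite_measure_subadditive_finite) auto
    finally have "measure_pmf.prob (profile_pmf C n) (UNIV - ?E) \<le> (\<Sum>ab\<in>I. measure_pmf.prob (profile_pmf C n) (F n ab))" .
    moreover have "measure_pmf.prob (profile_pmf C n) (UNIV - ?E) = 1 - measure_pmf.prob (profile_pmf C n) ?E"
      using measure_pmf.prob_compl[of ?E "profile_pmf C n"] by simp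
    ultimately show ?thesis by linarith
  qed
  show ?thesis
  proof (rule tendsto_sandwich[of "\<lambda>n. 1 - (\<Sum>ab\<in>I. measure_pmf.prob (profile_pmf C n) (F n ab))" _ _ "\<lambda>_. 1"])
    show "\<forall>\<^sub>F n in sequentially. 1 - (\<Sum>ab\<in>I. measure_pmf.prob (profile_pmf C n) (F n ab)) \<le> measure_pmf.prob (profile_pmf C n) {p. inj_on (score C w n p) C}"
      using low by simp
    show "\<forall>\<^sub>F n in sequentially. measure_pmf.prob (profile_pmf C n) {p. inj_on (score C w n p) C} \<le> 1"
      by simp
    show "(\<lambda>n. 1 - (\<Sum>ab\<in>I. measure_pmf.prob (profile_pmf C n) (F n ab))) \<longlonglongrightarrow> 1"
      using tendsto_diff[OF tendsto_const[of 1] lim0] by simp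
  qed simp
qed


end
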